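(* Let $\alpha<\beta$ with $\alpha+\beta>0$. As $\tau\to\infty$: (i) $\lim \tau I_2=\int_{-\alpha}^{\beta}\frac{1}{\sqrt{\zeta^2+4}}\sqrt{\frac{\alpha+\zeta}{\beta-\zeta}}\,d\zeta$ and $\lim\tau J_2=\int_{-\alpha}^{\beta}\frac{1}{\sqrt{\zeta^2+4}}\sqrt{\frac{\beta-\zeta}{\alpha+\zeta}}\,d\zeta$, and $\lim_{\tau\to\infty}\tau I_2<\lim_{\tau\to\infty}\tau J_2$; (ii) $\lim\tau(I_1-J_1)=-\int_{-\infty}^{-\alpha}\frac{\alpha+\beta}{\sqrt{\zeta^2+4}\sqrt{\beta-\zeta}\sqrt{-\alpha-\zeta}}\,d\zeta$ and $\lim\tau(I_3-J_3)=\int_{\beta}^{\infty}\frac{\alpha+\beta}{\sqrt{\zeta^2+4}\sqrt{\zeta-\beta}\sqrt{\zeta+\alpha}}\,d\zeta$, both finite and nonzero; (iii) $\tau(J_1+J_3)\to+\infty$.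
   Context: For real $\alpha,\beta,\tau$ with $-\tau<-\alpha<\beta<\tau$ put $g_1(\zeta)=|\zeta+\alpha|^{1/2}|\zeta-\beta|^{-1/2}(\tau^2-\zeta^2)^{-1/2}(\zeta^2+4)^{-1/2}$ and $g_2(\zeta)=|\zeta+\alpha|^{-1/2}|\zeta-\beta|^{1/2}(\tau^2-\zeta^2)^{-1/2}(\zeta^2+4)^{-1/2}$, and $I_1=\int_{-\tau}^{-\alpha}g_1$, $I_2=\int_{-\alpha}^{\beta}g_1$, $I_3=\int_{\beta}^{\tau}g_1$, $J_1,J_2,J_3$ likewise with $g_2$ (convergent improper integrals). Under $\alpha=a-1/a$, $\beta=b-1/b$, $\tau=t-1/t$ these coincide with the period integrals of the surfaces in class $\mathcal O$ with parameters $a,b,t$. *)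

theory Defs
  imports "HOL-Analysis.Analysis"
begin

text \<open>Integrands (the powers 1/2 and -1/2 written via sqrt; the value at the
finitely many singular points is irrelevant for the integrals).\<close>

definition g1 :: "real \<Rightarrow> real \<Rightarrow> real \<Rightarrow> real \<Rightarrow> real" where
  "g1 \<alpha> \<beta> \<tau> \<zeta> = sqrt \<bar>\<zeta> + \<alpha>\<bar> / (sqrt \<bar>\<zeta> - \<beta>\<bar> * sqrt (\<tau>\<^sup>2 - \<zeta>\<^sup>2) * sqrt (\<zeta>\<^sup>2 + 4))"

definition g2 :: "real \<Rightarrow> real \<Rightarrow> real \<Rightarrow> real \<Rightarrow> real" where
  "g2 \<alpha> \<beta> \<tau> \<zeta> = sqrt \<bar>\<zeta> - \<beta>\<bar> / (sqrt \<bar>\<zeta> + \<alpha>\<bar> * sqrt (\<tau>\<^sup>2 - \<zeta>\<^sup>2) * sqrt (\<zeta>\<^sup>2 + 4))"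

text \<open>The (convergent improper) integrals, as Henstock--Kurzweil integrals over the
closed intervals; the integrands are nonnegative with integrable singularities, so
these agree with the improper Riemann integrals.\<close>

definition I1 :: "real \<Rightarrow> real \<Rightarrow> real \<Rightarrow> real" where
  "I1 \<alpha> \<beta> \<tau> = integral {-\<tau>..-\<alpha>} (g1 \<alpha> \<beta> \<tau>)"
definition I2 :: "real \<Rightarrow> real \<Rightarrow> real \<Rightarrow> real" where
  "I2 \<alpha> \<beta> \<tau> = integral {-\<alpha>..\<beta>} (g1 \<alpha> \<beta> \<tau>)"
definition I3 :: "real \<Rightarrow> real \<Rightarrow> real \<Rightarrow> real" where
  "I3 \<alpha> \<beta> \<tau> = integral {\<beta>..\<tau>} (g1 \<alpha> \<beta> \<tau>)"
definition J1 :: "real \<Rightarrow> real \<Rightarrow> real \<Rightarrow> real" where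
  "J1 \<alpha> \<beta> \<tau> = integral {-\<tau>..-\<alpha>} (g2 \<alpha> \<beta> \<tau>)"
definition J2 :: "real \<Rightarrow> real \<Rightarrow> real \<Rightarrow> real" where
  "J2 \<alpha> \<beta> \<tau> = integral {-\<alpha>..\<beta>} (g2 \<alpha> \<beta> \<tau>)"
definition J3 :: "real \<Rightarrow> real \<Rightarrow> real \<Rightarrow> real" where
  "J3 \<alpha> \<beta> \<tau> = integral {\<beta>..\<tau>} (g2 \<alpha> \<beta> \<tau>)"

end

theory Submission imports Defs "HOL-Real_Asymp.Real_Asymp" begin

lemma sq4_pos [simp]: "(x::real)\<^sup>2 + 4 > 0"
  by (simp add: add_nonneg_pos)
lemma sq4_nz [simp]: "(x::real)\<^sup>2 + 4 \<noteq> 0"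
  using sq4_pos[of x] by linarith

lemma hoi: fixes f :: "real \<Rightarrow> 'a::banach" shows "(f has_integral y) {a<..<b} \<longleftrightarrow> (f has_integral y) {a..(b::real)}"
  using has_integral_open_interval[of f y a b] by simp

lemma dom_Ioo:
  fixes f g :: "real \<Rightarrow> real"
  assumes "continuous_on {p<..<q} f" "g integrable_on {p..q}" "\<And>x. x \<in> {p<..<q} \<Longrightarrow> \<bar>f x\<bar> \<le> g x"
  shows "f integrable_on {p..q}"
proof -
  have "f absolutely_integrable_on {p<..<q}"
    by (rule measurable_bounded_by_integrable_imp_absolutely_integrable[where g=g])
       (use assms in \<open>auto intro: continuous_imp_measurable_on_sets_lebesgue simp: integrable_on_open_interval_real\<close>)
  then show ?thesis using integrable_on_open_interval_real absolutely_integrable_on_def by blast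
qed

lemma dom_Ioi:
  fixes f g :: "real \<Rightarrow> real"
  assumes "continuous_on {p<..} f" "g integrable_on {p..}" "\<And>x. x \<in> {p<..} \<Longrightarrow> \<bar>f x\<bar> \<le> g x"
  shows "f integrable_on {p..}"
proof -
  have neg: "negligible (({p..} - {p<..}) \<union> ({p<..} - {p..}))"
    by (rule negligible_subset[of "{p}"]) auto
  have g: "g integrable_on {p<..}" using assms(2) integrable_spike_set_eq[OF neg] by blast
  have "f absolutely_integrable_on {p<..}"
    by (rule measurable_bounded_by_integrable_imp_absolutely_integrable[where g=g])
       (use assms g in \<open>auto intro: continuous_imp_measurable_on_sets_lebesgue\<close>)
  then show ?thesis using integrable_spike_set_eq[OF neg] absolutely_integrable_on_def by blast
qed

lemma sing_right:
  fixes p q :: real assumes "p < q"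
  shows "((\<lambda>x. 1 / sqrt (q - x)) has_integral 2 * sqrt (q - p)) {p..q}"
proof -
  have "((\<lambda>x. 1 / sqrt (q - x)) has_integral ((-2 * sqrt (q - q)) - (-2 * sqrt (q - p)))) {p..q}"
  proof (rule fundamental_theorem_of_calculus_interior)
    show "continuous_on {p..q} (\<lambda>x. -2 * sqrt (q - x))" by (intro continuous_intros)
    fix x assume x: "x \<in> {p<..<q}"
    have "((\<lambda>x. -2 * sqrt (q - x)) has_real_derivative 1 / sqrt (q - x)) (at x)"
      using x by (auto intro!: derivative_eq_intros simp: divide_simps)
    then show "((\<lambda>x. -2 * sqrt (q - x)) has_vector_derivative 1 / sqrt (q - x)) (at x)"
      by (simp add: has_real_derivative_iff_has_vector_derivative field_simps)
  qed (use assms in auto)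
  then show ?thesis by simp
qed

lemma sing_left:
  fixes p q :: real assumes "p < q"
  shows "((\<lambda>x. 1 / sqrt (x - p)) has_integral 2 * sqrt (q - p)) {p..q}"
proof -
  have "((\<lambda>x. 1 / sqrt (x - p)) has_integral ((2 * sqrt (q - p)) - (2 * sqrt (p - p)))) {p..q}"
  proof (rule fundamental_theorem_of_calculus_interior)
    show "continuous_on {p..q} (\<lambda>x. 2 * sqrt (x - p))" by (intro continuous_intros)
    fix x assume x: "x \<in> {p<..<q}"
    have "((\<lambda>x. 2 * sqrt (x - p)) has_real_derivative 1 / sqrt (x - p)) (at x)"
      using x by (auto intro!: derivative_eq_intros simp: divide_simps)
    then show "((\<lambda>x. 2 * sqrt (x - p)) has_vector_derivative 1 / sqrt (x - p)) (at x)"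
      by (simp add: has_real_derivative_iff_has_vector_derivative field_simps)
  qed (use assms in auto)
  then show ?thesis by simp
qed

lemma G1:
  fixes a b :: real
  assumes s: "a + b > 0"
  shows "(\<lambda>\<zeta>. 1 / sqrt (\<zeta>\<^sup>2 + 4) * sqrt ((a + \<zeta>) / (b - \<zeta>))) integrable_on {-a..b} \<and>
         ((\<lambda>\<tau>. \<tau> * I2 a b \<tau>) \<longlongrightarrow> integral {-a..b} (\<lambda>\<zeta>. 1 / sqrt (\<zeta>\<^sup>2 + 4) * sqrt ((a + \<zeta>) / (b - \<zeta>)))) at_top"
proof -
  define f where "f = (\<lambda>\<zeta>::real. 1 / sqrt (\<zeta>\<^sup>2 + 4) * sqrt ((a + \<zeta>) / (b - \<zeta>)))"
  have fcont: "continuous_on {-a<..<b} f" unfolding f_def by (intro continuous_intros) auto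
  have fnn: "f x \<ge> 0" if "x \<in> {-a<..<b}" for x using that unfolding f_def by auto
  have fbound: "\<bar>f x\<bar> \<le> sqrt (a + b) / 2 * (1 / sqrt (b - x))" if x: "x \<in> {-a<..<b}" for x
  proof -
    have e: "f x = sqrt (a + x) / (sqrt (x\<^sup>2 + 4) * sqrt (b - x))"
      unfolding f_def by (simp add: real_sqrt_divide)
    have 1: "sqrt (a + x) \<le> sqrt (a + b)" using x by auto
    have 2: "2 \<le> sqrt (x\<^sup>2 + 4)"
      using real_sqrt_le_mono[of 4 "x\<^sup>2 + 4"] by auto
    have 3: "sqrt (b - x) > 0" using x by auto
    have "sqrt (a + x) / (sqrt (x\<^sup>2 + 4) * sqrt (b - x)) \<le> sqrt (a + b) / (2 * sqrt (b - x))"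
      by (rule frac_le) (use 1 2 3 s in \<open>auto intro: mult_right_mono\<close>)
    then show ?thesis using fnn[OF x] e by simp
  qed
  have gint: "(\<lambda>x. sqrt (a + b) / 2 * (1 / sqrt (b - x))) integrable_on {-a..b}"
    using has_integral_mult_right[OF sing_right[of "-a" b], of "sqrt (a + b) / 2"] s
    unfolding integrable_on_def by auto
  have fint: "f integrable_on {-a..b}"
    by (rule dom_Ioo[OF fcont gint fbound])
  define M where "M = \<bar>a\<bar> + \<bar>b\<bar>"
  have xM: "x\<^sup>2 \<le> M\<^sup>2" if "x \<in> {-a<..<b}" for x
  proof -
    have "\<bar>x\<bar> \<le> \<bar>M\<bar>" using that unfolding M_def by auto
    then show ?thesis by (simp add: abs_le_square_iff)
  qed
  have key: "f x \<le> t * g1 a b t x \<and> t * g1 a b t x \<le> t / sqrt (t\<^sup>2 - M\<^sup>2) * f x"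
    if t: "t > M" and x: "x \<in> {-a<..<b}" for t x
  proof -
    have M0: "M \<ge> 0" unfolding M_def by auto
    have "M\<^sup>2 < t\<^sup>2" using t M0 by (intro power_strict_mono) auto
    then have tM: "t\<^sup>2 - M\<^sup>2 > 0" by simp
    have tx: "t\<^sup>2 - x\<^sup>2 \<ge> t\<^sup>2 - M\<^sup>2" using xM[OF x] by auto
    have sq1: "sqrt (t\<^sup>2 - x\<^sup>2) \<ge> sqrt (t\<^sup>2 - M\<^sup>2)" using tx by auto
    have sq2: "sqrt (t\<^sup>2 - x\<^sup>2) \<le> t" using t M0 real_sqrt_le_mono[of "t\<^sup>2 - x\<^sup>2" "t\<^sup>2"] by auto
    have sqp: "sqrt (t\<^sup>2 - M\<^sup>2) > 0" using tM by auto
    have eq: "t * g1 a b t x = f x * (t / sqrt (t\<^sup>2 - x\<^sup>2))"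
      using x unfolding g1_def f_def by (simp add: real_sqrt_divide abs_of_pos abs_of_neg field_simps)
    have r1: "1 \<le> t / sqrt (t\<^sup>2 - x\<^sup>2)" using sq2 sq1 sqp by (simp add: divide_simps)
    have r2: "t / sqrt (t\<^sup>2 - x\<^sup>2) \<le> t / sqrt (t\<^sup>2 - M\<^sup>2)"
      using sq1 sqp t M0 by (intro divide_left_mono) auto
    have m1: "f x * 1 \<le> f x * (t / sqrt (t\<^sup>2 - x\<^sup>2))" by (rule mult_left_mono[OF r1 fnn[OF x]])
    have m2: "f x * (t / sqrt (t\<^sup>2 - x\<^sup>2)) \<le> f x * (t / sqrt (t\<^sup>2 - M\<^sup>2))" by (rule mult_left_mono[OF r2 fnn[OF x]])
    show ?thesis using eq m1 m2 by (simp add: mult.commute)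
  qed
  have tint: "(\<lambda>x. t * g1 a b t x) integrable_on {-a..b}" if t: "t > M" for t
  proof (rule dom_Ioo[where g = "\<lambda>x. t / sqrt (t\<^sup>2 - M\<^sup>2) * f x"])
    show "(\<lambda>x. t / sqrt (t\<^sup>2 - M\<^sup>2) * f x) integrable_on {-a..b}"
      using fint by (rule integrable_on_mult_right)
    show "\<bar>t * g1 a b t x\<bar> \<le> t / sqrt (t\<^sup>2 - M\<^sup>2) * f x" if "x \<in> {-a<..<b}" for x
      using key[OF t that] fnn[OF that] by auto
    have pos: "t\<^sup>2 - x\<^sup>2 > 0" if "x \<in> {-a<..<b}" for x
    proof -
      have "M\<^sup>2 < t\<^sup>2" using t unfolding M_def by (intro power_strict_mono) auto
      then show ?thesis using xM[OF that] by auto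
    qed
    have pos2: "(t\<^sup>2 = x\<^sup>2) = False" "(x\<^sup>2 = t\<^sup>2) = False" "(t\<^sup>2 - x\<^sup>2 = 0) = False" if "-a < x" "x < b" for x
      using pos[of x] that by auto
    show "continuous_on {-a<..<b} (\<lambda>x. t * g1 a b t x)"
      unfolding g1_def by (intro continuous_intros) (auto simp: pos2)
  qed
  have ev: "\<forall>\<^sub>F t in at_top. integral {-a..b} f \<le> t * I2 a b t \<and> t * I2 a b t \<le> t / sqrt (t\<^sup>2 - M\<^sup>2) * integral {-a..b} f"
  proof (rule eventually_at_top_linorderI[of "M + 1"])
    fix t :: real assume "t \<ge> M + 1" then have t: "t > M" by auto
    have "t * I2 a b t = integral {-a..b} (\<lambda>x. t * g1 a b t x)" unfolding I2_def by simp
    also have "\<dots> = integral {-a<..<b} (\<lambda>x. t * g1 a b t x)" by (rule integral_open_interval_real)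
    finally have e: "t * I2 a b t = integral {-a<..<b} (\<lambda>x. t * g1 a b t x)" .
    have i1: "(\<lambda>x. t * g1 a b t x) integrable_on {-a<..<b}" using tint[OF t] integrable_on_open_interval_real by blast
    have i2: "f integrable_on {-a<..<b}" using fint integrable_on_open_interval_real by blast
    have i3: "(\<lambda>x. t / sqrt (t\<^sup>2 - M\<^sup>2) * f x) integrable_on {-a<..<b}" using integrable_on_mult_right[OF i2] by blast
    have A: "integral {-a<..<b} f \<le> integral {-a<..<b} (\<lambda>x. t * g1 a b t x)"
      by (rule integral_le[OF i2 i1]) (use key[OF t] in blast)
    have B: "integral {-a<..<b} (\<lambda>x. t * g1 a b t x) \<le> integral {-a<..<b} (\<lambda>x. t / sqrt (t\<^sup>2 - M\<^sup>2) * f x)"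
      by (rule integral_le[OF i1 i3]) (use key[OF t] in blast)
    have e2: "integral {-a..b} f = integral {-a<..<b} f" by (rule integral_open_interval_real)
    have e3: "integral {-a<..<b} (\<lambda>x. t / sqrt (t\<^sup>2 - M\<^sup>2) * f x) = t / sqrt (t\<^sup>2 - M\<^sup>2) * integral {-a<..<b} f"
      by (rule integral_mult_right)
    show "integral {-a..b} f \<le> t * I2 a b t \<and> t * I2 a b t \<le> t / sqrt (t\<^sup>2 - M\<^sup>2) * integral {-a..b} f"
      unfolding e e2 using A B e3 by linarith
  qed
  have lim1: "((\<lambda>t. t / sqrt (t\<^sup>2 - M\<^sup>2)) \<longlongrightarrow> 1) at_top" by real_asymp
  have lim2: "((\<lambda>t. t / sqrt (t\<^sup>2 - M\<^sup>2) * integral {-a..b} f) \<longlongrightarrow> integral {-a..b} f) at_top"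
    using tendsto_mult_right[OF lim1, of "integral {-a..b} f"] by simp
  have "((\<lambda>t. t * I2 a b t) \<longlongrightarrow> integral {-a..b} f) at_top"
    by (rule tendsto_sandwich[OF _ _ tendsto_const lim2]) (use ev in \<open>auto elim: eventually_mono\<close>)
  then show ?thesis using fint unfolding f_def by blast
qed

lemma G3_pre:
  fixes a b m0 :: real and K :: "real \<Rightarrow> real"
  assumes s: "a + b > 0"
  assumes K_def: "K = (\<lambda>\<zeta>. (a + b) / (sqrt (\<zeta>\<^sup>2 + 4) * sqrt (\<zeta> - b) * sqrt (\<zeta> + a)))"
  assumes m0_def: "m0 = 2 * (\<bar>a\<bar> + \<bar>b\<bar>) + 1"
  shows "K integrable_on {b..} \<and> integral {b..} K > 0
     \<and> (\<forall>x\<ge>b. K x \<ge> 0)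
     \<and> (\<forall>q>b. K integrable_on {b..q})
     \<and> (\<forall>x\<ge>m0. K x \<le> 2 * (a + b) * (1 / x\<^sup>2))
     \<and> (\<forall>q\<ge>m0. integral {b..q} K \<ge> integral {b..} K - 2 * (a + b) / q)
     \<and> (\<forall>q\<ge>b. integral {b..q} K \<le> integral {b..} K)
     \<and> continuous_on {b<..} K"
proof -
  have Knn: "K x \<ge> 0" if "x \<ge> b" for x
    unfolding K_def using that s by (intro divide_nonneg_nonneg mult_nonneg_nonneg) auto
  have Kcont: "continuous_on {b<..} K"
    unfolding K_def using s by (intro continuous_intros) auto
  have Kb1: "\<bar>K x\<bar> \<le> sqrt (a + b) / 2 * (1 / sqrt (x - b))" if x: "x > b" for x
  proof -
    have 1: "sqrt (a + b) \<le> sqrt (x + a)" using x by auto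
    have 2: "2 \<le> sqrt (x\<^sup>2 + 4)"
      using real_sqrt_le_mono[of 4 "x\<^sup>2 + 4"] by auto
    have 3: "sqrt (x - b) > 0" using x by auto
    have 4: "sqrt (a + b) > 0" using s by auto
    have "2 * sqrt (x - b) * sqrt (a + b) \<le> sqrt (x\<^sup>2 + 4) * sqrt (x - b) * sqrt (x + a)"
      using 1 2 3 4 by (intro mult_mono) auto
    then have "K x \<le> (a + b) / (2 * sqrt (x - b) * sqrt (a + b))"
      unfolding K_def using s 3 4 by (intro divide_left_mono) auto
    also have "\<dots> = sqrt (a + b) / 2 * (1 / sqrt (x - b))"
      using real_div_sqrt[of "a + b"] s 3 4 by (simp add: field_simps)
    finally show ?thesis using Knn[of x] x by simp
  qed
  have m0pos: "m0 \<ge> 1" unfolding m0_def by auto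
  have bm0: "b < m0" unfolding m0_def by auto
  have Kb2: "\<bar>K x\<bar> \<le> 2 * (a + b) * (1 / x\<^sup>2)" if x: "x \<ge> m0" for x
  proof -
    have xp: "x > 0" using x m0pos by auto
    have h1: "x - b \<ge> x / 2" "x + a \<ge> x / 2" using x unfolding m0_def by auto
    have "(x / 2)\<^sup>2 \<le> (x - b) * (x + a)"
      using h1 xp mult_mono[OF h1] by (simp add: power2_eq_square)
    then have "x / 2 \<le> sqrt ((x - b) * (x + a))" by (rule real_le_rsqrt)
    then have d1: "x / 2 \<le> sqrt (x - b) * sqrt (x + a)" by (simp add: real_sqrt_mult)
    have d2: "x \<le> sqrt (x\<^sup>2 + 4)" using real_sqrt_le_mono[of "x\<^sup>2" "x\<^sup>2 + 4"] xp by simp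
    have "x * (x / 2) \<le> sqrt (x\<^sup>2 + 4) * (sqrt (x - b) * sqrt (x + a))"
      using d1 d2 xp by (intro mult_mono) auto
    then have "K x \<le> (a + b) / (x * (x / 2))"
      unfolding K_def using s xp h1 by (intro divide_left_mono) (auto simp: mult.assoc intro!: mult_pos_pos)
    also have "\<dots> = 2 * (a + b) * (1 / x\<^sup>2)" by (simp add: power2_eq_square)
    finally show ?thesis using Knn[of x] x bm0 by simp
  qed
  have KIcc: "K integrable_on {b..q}" if q: "q > b" for q
  proof (rule dom_Ioo[where g = "\<lambda>x. sqrt (a + b) / 2 * (1 / sqrt (x - b))"])
    show "continuous_on {b<..<q} K" using Kcont by (rule continuous_on_subset) auto
    show "(\<lambda>x. sqrt (a + b) / 2 * (1 / sqrt (x - b))) integrable_on {b..q}"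
      using has_integral_mult_right[OF sing_left[OF q], of "sqrt (a + b) / 2"]
      unfolding integrable_on_def by auto
  qed (use Kb1 in auto)
  have tail: "K integrable_on {q..} \<and> integral {q..} K \<le> 2 * (a + b) / q" if q: "q \<ge> m0" for q
  proof -
    have qp: "q > 0" using q m0pos by auto
    have hi: "((\<lambda>x. 2 * (a + b) * (1 / x ^ 2)) has_integral 2 * (a + b) * (1 / (real (2 - 1) * q ^ (2 - 1)))) {q..}"
      by (rule has_integral_mult_right[OF has_integral_inverse_power_to_inf]) (use qp in auto)
    have gi: "(\<lambda>x. 2 * (a + b) * (1 / x\<^sup>2)) integrable_on {q..}" using hi unfolding integrable_on_def by auto
    have ki: "K integrable_on {q..}"
      by (rule dom_Ioi[OF _ gi]) (use Kcont q bm0 Kb2 in \<open>auto intro: continuous_on_subset\<close>)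
    have "integral {q..} K \<le> integral {q..} (\<lambda>x. 2 * (a + b) * (1 / x\<^sup>2))"
    proof (rule integral_le[OF ki gi])
      fix x assume "x \<in> {q..}"
      then have "x \<ge> m0" using q by auto
      from Kb2[OF this] show "K x \<le> 2 * (a + b) * (1 / x\<^sup>2)" by linarith
    qed
    also have "\<dots> = 2 * (a + b) / q" using integral_unique[OF hi] by simp
    finally show ?thesis using ki by auto
  qed
  have negl: "negligible ({b..q} \<inter> {q..})" for q :: real
    by (rule negligible_subset[of "{q}"]) auto
  have un: "{b..} = {b..q} \<union> {q..}" if "q \<ge> b" for q :: real using that by auto
  have Kint: "K integrable_on {b..}"
    using integrable_Un[OF negl KIcc[OF bm0] conjunct1[OF tail[OF order.refl]]] un[of m0] bm0 by auto
  have split: "integral {b..} K = integral {b..q} K + integral {q..} K" if "q \<ge> m0" for q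
  proof -
    have "q > b" using that bm0 by auto
    then show ?thesis using integral_Un[OF KIcc[OF \<open>q > b\<close>] conjunct1[OF tail[OF that]] negl] un[of q] by auto
  qed
  have sub: "integral {b..q} K \<le> integral {b..} K" if "q \<ge> b" for q
  proof (cases "q = b")
    case True then show ?thesis using integral_nonneg[OF Kint] Knn by auto
  next
    case False
    then show ?thesis using that
      by (intro integral_subset_le KIcc Kint) (use Knn in auto)
  qed
  have low: "integral {b..q} K \<ge> integral {b..} K - 2 * (a + b) / q" if "q \<ge> m0" for q
    using split[OF that] tail[OF that] by linarith
  have pos: "integral {b..} K > 0"
  proof -
    have c: "continuous_on (cbox m0 (m0 + 1)) K"
      using Kcont bm0 by (auto intro: continuous_on_subset)
    have e: "integral (cbox m0 (m0 + 1)) K = 0 \<longleftrightarrow> (\<forall>x\<in>cbox m0 (m0 + 1). K x = 0)"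
      by (rule integral_cbox_eq_0_iff[OF c]) (use Knn bm0 in auto)
    have "K m0 \<noteq> 0" unfolding K_def using s bm0 m0pos by auto
    then have ne: "integral {m0..m0 + 1} K \<noteq> 0" using e by auto
    have i1: "K integrable_on {m0..m0+1}" using integrable_continuous_interval[of m0 "m0+1" K] c by auto
    have "integral {m0..m0+1} K \<ge> 0" by (rule integral_nonneg[OF i1]) (use Knn bm0 in auto)
    moreover have "integral {m0..m0+1} K \<le> integral {b..} K"
      by (rule integral_subset_le[OF _ i1 Kint]) (use Knn bm0 in auto)
    ultimately show ?thesis using ne by linarith
  qed
  have Kb2': "\<forall>x\<ge>m0. K x \<le> 2 * (a + b) * (1 / x\<^sup>2)" using Kb2 abs_le_D1 by blast
  show ?thesis using Kint pos Knn KIcc Kb2' low sub Kcont by blast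
qed

lemma G3:
  fixes a b :: real and K :: "real \<Rightarrow> real"
  assumes s: "a + b > 0"
  assumes K_def: "K = (\<lambda>\<zeta>. (a + b) / (sqrt (\<zeta>\<^sup>2 + 4) * sqrt (\<zeta> - b) * sqrt (\<zeta> + a)))"
  shows "((\<lambda>\<tau>. \<tau> * (I3 a b \<tau> - J3 a b \<tau>)) \<longlongrightarrow> integral {b..} K) at_top
     \<and> filterlim (\<lambda>\<tau>. \<tau> * I3 a b \<tau>) at_top at_top"
proof -
  define m0 where "m0 = 2 * (\<bar>a\<bar> + \<bar>b\<bar>) + 1"
  note P = G3_pre[OF s K_def m0_def]
  have Kint: "K integrable_on {b..}" and Knn: "\<And>x. x \<ge> b \<Longrightarrow> K x \<ge> 0"
    and KIcc: "\<And>q. q > b \<Longrightarrow> K integrable_on {b..q}"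
    and Kb2: "\<And>x. x \<ge> m0 \<Longrightarrow> K x \<le> 2 * (a + b) * (1 / x\<^sup>2)"
    and low: "\<And>q. q \<ge> m0 \<Longrightarrow> integral {b..q} K \<ge> integral {b..} K - 2 * (a + b) / q"
    and sub: "\<And>q. q \<ge> b \<Longrightarrow> integral {b..q} K \<le> integral {b..} K"
    and Kcont: "continuous_on {b<..} K"
    using P by blast+
  define L where "L = integral {b..} K"
  define c0 where "c0 = 2 * \<bar>b\<bar> + 2"
  have m0ge: "m0 \<ge> 2 * \<bar>b\<bar> + 1" "m0 \<ge> 1" unfolding m0_def by auto
  have evE: "\<forall>\<^sub>F t in at_top. 1 \<le> t \<and> m0 \<le> t powr (3/4) \<and> t powr (3/4) < t"
  proof -
    have "\<forall>\<^sub>F t in at_top. (1::real) \<le> t" by (rule eventually_ge_at_top)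
    moreover have "\<forall>\<^sub>F t in at_top. m0 \<le> t powr (3/4)" by real_asymp
    moreover have "\<forall>\<^sub>F t::real in at_top. t powr (3/4) < t" by real_asymp
    ultimately show ?thesis by eventually_elim auto
  qed
  have main: "integral {b..} K - 2 * (a + b) / t \<le> t * (I3 a b t - J3 a b t)
      \<and> t * (I3 a b t - J3 a b t) \<le> t / sqrt (t\<^sup>2 - (t powr (3/4))\<^sup>2) * L + 2 * (2 * (a + b) / (t powr (3/4))\<^sup>2 * sqrt t) * sqrt (t - b)
      \<and> ln (t + c0) - ln (b + c0) \<le> t * I3 a b t"
    if tE: "1 \<le> t \<and> m0 \<le> t powr (3/4) \<and> t powr (3/4) < t" for t
  proof -
    define m where "m = t powr (3/4)"
    have t1: "t \<ge> 1" and mm0: "m0 \<le> m" and mt: "m < t" using tE unfolding m_def by auto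
    have mpos: "m > 0" using mm0 m0ge by auto
    have tm0: "t \<ge> m0" using mm0 mt by auto
    have tb: "t > \<bar>b\<bar>" using tm0 m0ge by auto
    have bt: "b < t" using tb by auto
    define r where "r = t / sqrt (t\<^sup>2 - m\<^sup>2)"
    define c where "c = 2 * (a + b) / m\<^sup>2 * sqrt t"
    define h where "h = (\<lambda>x. K x * (t / sqrt (t\<^sup>2 - x\<^sup>2)))"
    have m2t2: "m\<^sup>2 < t\<^sup>2" using mpos mt by (intro power_strict_mono) auto
    have rpos: "r > 0" unfolding r_def using m2t2 t1 by auto
    have cnn: "c \<ge> 0" unfolding c_def using s t1 by (intro divide_nonneg_nonneg mult_nonneg_nonneg) auto
    have pw: "g1 a b t x = g2 a b t x + h x / t \<and> K x \<le> h x \<and> h x \<le> r * K x + c * (1 / sqrt (t - x))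
       \<and> \<bar>g2 a b t x\<bar> \<le> 1 / (2 * sqrt (t + b)) * (1 / sqrt (t - x))
       \<and> 1 / (x + c0) \<le> t * g1 a b t x \<and> h x \<ge> 0"
      if x: "x \<in> {b<..<t}" for x
    proof -
      have xb: "x - b > 0" and xa: "x + a > 0" and tx: "t - x > 0" and tpx: "t + x > 0"
        using x s tb by auto
      define A where "A = sqrt (x + a)"
      define B where "B = sqrt (x - b)"
      define Q where "Q = sqrt (t - x)"
      define Pp where "Pp = sqrt (t + x)"
      define S where "S = sqrt (t\<^sup>2 - x\<^sup>2)"
      define U where "U = sqrt (x\<^sup>2 + 4)"
      have Ap: "A > 0" and Bp: "B > 0" and Qp: "Q > 0" and Pp0: "Pp > 0" and Up: "U \<ge> 2"
        unfolding A_def B_def Q_def Pp_def U_def using xb xa tx tpx real_sqrt_le_mono[of 4 "x\<^sup>2 + 4"] by auto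
      have AA: "A * A = x + a" unfolding A_def using xa by simp
      have BB: "B * B = x - b" unfolding B_def using xb by simp
      have SQP: "S = Q * Pp" unfolding S_def Q_def Pp_def
        by (simp add: real_sqrt_mult[symmetric] power2_eq_square algebra_simps)
      have Sp: "S > 0" using SQP Qp Pp0 by auto
      have St: "S \<le> t" unfolding S_def using t1 real_sqrt_le_mono[of "t\<^sup>2 - x\<^sup>2" "t\<^sup>2"] by auto
      have g1e: "g1 a b t x = A / (B * S * U)"
        unfolding g1_def A_def B_def S_def U_def using xa xb by (simp add: abs_of_pos add.commute)
      have g2e: "g2 a b t x = B / (A * S * U)"
        unfolding g2_def A_def B_def S_def U_def using xa xb by (simp add: abs_of_pos add.commute)
      have Ke: "K x = (a + b) / (U * B * A)"
        unfolding K_def A_def B_def U_def by simp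
      have he: "h x = K x * (t / S)" unfolding h_def S_def by simp
      have Knx: "K x \<ge> 0" using Knn[of x] x by auto
      have fac1: "t / S \<ge> 1" using St Sp by (simp add: divide_simps)
      have hnn: "h x \<ge> 0" unfolding he by (intro mult_nonneg_nonneg) (use Knx fac1 in linarith)+
      have "A / (B * S * U) - B / (A * S * U) = (A * A - B * B) / (A * B * S * U)"
        using Ap Bp Sp Up by (simp add: field_simps)
      also have "A * A - B * B = a + b" using AA BB by simp
      finally have "A / (B * S * U) = B / (A * S * U) + (a + b) / (A * B * S * U)" by simp
      moreover have "(a + b) / (A * B * S * U) = K x * (t / S) / t"
        unfolding Ke using t1 Ap Bp Sp Up by (simp add: field_simps)
      ultimately have e1: "g1 a b t x = g2 a b t x + h x / t" using g1e g2e he by simp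
      have e2: "K x \<le> h x" using he Knx fac1 mult_left_mono[OF fac1 Knx] by simp
      have e3: "h x \<le> r * K x + c * (1 / sqrt (t - x))"
      proof (cases "x \<le> m")
        case True
        have "\<bar>x\<bar> \<le> \<bar>m\<bar>" using True x mm0 m0ge mpos by auto
        then have "x\<^sup>2 \<le> m\<^sup>2" by (simp add: abs_le_square_iff)
        then have "sqrt (t\<^sup>2 - m\<^sup>2) \<le> S" unfolding S_def by auto
        then have "t / S \<le> r" unfolding r_def using m2t2 t1 Sp by (intro divide_left_mono) auto
        then have "h x \<le> K x * r" using he mult_left_mono Knx by metis
        moreover have "c * (1 / sqrt (t - x)) \<ge> 0" using cnn tx by auto
        ultimately show ?thesis by (simp add: mult.commute)
      next
        case False
        then have xm: "x > m" by simp
        have "K x \<le> 2 * (a + b) * (1 / x\<^sup>2)" using Kb2[of x] xm mm0 by auto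
        also have "\<dots> \<le> 2 * (a + b) * (1 / m\<^sup>2)"
          using s xm mpos by (intro mult_left_mono divide_left_mono power_mono) auto
        finally have k1: "K x \<le> 2 * (a + b) / m\<^sup>2" by simp
        have "sqrt t \<le> Pp" unfolding Pp_def using xm mpos by auto
        then have "Q * sqrt t \<le> S" using SQP Qp by (simp add: mult_left_mono)
        then have "t / S \<le> t / (Q * sqrt t)" using Qp t1 Sp by (intro divide_left_mono) auto
        also have "t / (Q * sqrt t) = sqrt t * (1 / Q)"
          using t1 Qp real_div_sqrt[of t] by (simp add: field_simps)
        finally have f2: "t / S \<le> sqrt t * (1 / Q)" .
        have "h x \<le> (2 * (a + b) / m\<^sup>2) * (sqrt t * (1 / Q))"
          unfolding he using k1 f2 Knx fac1 by (intro mult_mono) auto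
        also have "\<dots> = c * (1 / sqrt (t - x))" unfolding c_def Q_def by simp
        finally show ?thesis using rpos Knx by (smt (verit) mult_nonneg_nonneg)
      qed
      have e4: "\<bar>g2 a b t x\<bar> \<le> 1 / (2 * sqrt (t + b)) * (1 / sqrt (t - x))"
      proof -
        have BA: "B \<le> A" unfolding A_def B_def using s by auto
        have g2nn: "g2 a b t x \<ge> 0" using g2e Ap Bp Sp Up by auto
        have "g2 a b t x \<le> A / (A * S * U)" unfolding g2e using BA Ap Sp Up by (intro divide_right_mono) auto
        also have "\<dots> = 1 / (S * U)" using Ap by simp
        also have "\<dots> \<le> 1 / (Q * sqrt (t + b) * 2)"
        proof (rule divide_left_mono)
          have "sqrt (t + b) \<le> Pp" unfolding Pp_def using x by auto
          then show "Q * sqrt (t + b) * 2 \<le> S * U" unfolding SQP using Qp Up tb Pp0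
            by (intro mult_mono) (auto intro: mult_left_mono)
          show "0 < S * U * (Q * sqrt (t + b) * 2)" using Sp Up Qp tb by auto
        qed auto
        also have "\<dots> = 1 / (2 * sqrt (t + b)) * (1 / sqrt (t - x))" unfolding Q_def by simp
        finally show ?thesis using g2nn by simp
      qed
      have e5: "1 / (x + c0) \<le> t * g1 a b t x"
      proof -
        have AB: "A / B \<ge> 1" unfolding A_def B_def using s Bp B_def by (auto simp: divide_simps)
        have q1: "(\<bar>x\<bar> + 2)\<^sup>2 = \<bar>x\<bar>\<^sup>2 + 4 * \<bar>x\<bar> + 4" by (simp add: power2_eq_square algebra_simps)
        have q2: "\<bar>x\<bar>\<^sup>2 = x\<^sup>2" by simp
        have "x\<^sup>2 + 4 \<le> (\<bar>x\<bar> + 2)\<^sup>2" unfolding q1 q2 by simp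
        then have "U \<le> sqrt ((\<bar>x\<bar> + 2)\<^sup>2)" unfolding U_def by (rule real_sqrt_le_mono)
        also have "\<dots> = \<bar>x\<bar> + 2" by simp
        also have "\<dots> \<le> x + c0" unfolding c0_def using x by auto
        finally have Ux: "U \<le> x + c0" .
        have "1 / (x + c0) \<le> 1 / U" using Ux Up by (intro divide_left_mono) auto
        also have "\<dots> = 1 * 1 * (1 / U)" by simp
        also have "\<dots> \<le> (A / B) * (t / S) * (1 / U)"
          using AB fac1 Up Ap Bp Sp t1 by (intro mult_mono) auto
        also have "\<dots> = t * g1 a b t x" unfolding g1e by (simp add: field_simps)
        finally show ?thesis .
      qed
      show ?thesis using e1 e2 e3 e4 e5 hnn by blast
    qed
    have tpos: "t > 0" using t1 by auto
    have nz: "t\<^sup>2 - x\<^sup>2 \<noteq> 0" if "x \<in> {b<..<t}" for x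
    proof -
      have "\<bar>x\<bar> < t" using that tb by auto
      then have "\<bar>x\<bar>\<^sup>2 < t\<^sup>2" by (intro power_strict_mono) auto
      then have "x\<^sup>2 < t\<^sup>2" by simp
      then show ?thesis by simp
    qed
    have hint: "h integrable_on {b..t}"
    proof (rule dom_Ioo[where g = "\<lambda>x. r * K x + c * (1 / sqrt (t - x))"])
      show "continuous_on {b<..<t} h" unfolding h_def
        by (intro continuous_intros continuous_on_subset[OF Kcont]) (auto dest: nz)
      have "(\<lambda>x. c * (1 / sqrt (t - x))) integrable_on {b..t}"
        using has_integral_mult_right[OF sing_right[OF bt], of c] unfolding integrable_on_def by auto
      then show "(\<lambda>x. r * K x + c * (1 / sqrt (t - x))) integrable_on {b..t}"
        using integrable_add integrable_on_mult_right KIcc[OF bt] by blast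
    qed (use pw in auto)
    have g2int: "g2 a b t integrable_on {b..t}"
    proof (rule dom_Ioo[where g = "\<lambda>x. 1 / (2 * sqrt (t + b)) * (1 / sqrt (t - x))"])
      show "continuous_on {b<..<t} (g2 a b t)" unfolding g2_def using s
        by (intro continuous_intros) (auto dest: nz)
      show "(\<lambda>x. 1 / (2 * sqrt (t + b)) * (1 / sqrt (t - x))) integrable_on {b..t}"
        using has_integral_mult_right[OF sing_right[OF bt], of "1 / (2 * sqrt (t + b))"]
        unfolding integrable_on_def by auto
    qed (use pw in auto)
    have hio: "h integrable_on {b<..<t}" and g2io: "g2 a b t integrable_on {b<..<t}"
      using hint g2int integrable_on_open_interval_real by blast+
    have KIo: "K integrable_on {b<..<t}" using KIcc[OF bt] integrable_on_open_interval_real by blast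
    have I3e: "I3 a b t = J3 a b t + integral {b<..<t} h / t"
    proof -
      have "I3 a b t = integral {b<..<t} (g1 a b t)" unfolding I3_def by (rule integral_open_interval_real)
      also have "\<dots> = integral {b<..<t} (\<lambda>x. g2 a b t x + h x / t)"
        by (rule integral_cong) (use pw in blast)
      also have "\<dots> = integral {b<..<t} (g2 a b t) + integral {b<..<t} h / t"
      proof -
        have hdiv: "(\<lambda>x. h x / t) integrable_on {b<..<t}" using hio tpos by simp
        show ?thesis using integral_add[OF g2io hdiv] by simp
      qed
      also have "integral {b<..<t} (g2 a b t) = J3 a b t" unfolding J3_def by (rule integral_open_interval_real[symmetric])
      finally show ?thesis .
    qed
    have De: "t * (I3 a b t - J3 a b t) = integral {b<..<t} h" using I3e tpos by simp
    have lowh: "integral {b<..<t} K \<le> integral {b<..<t} h"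
      by (rule integral_le[OF KIo hio]) (use pw in blast)
    have sqint: "((\<lambda>x. c * (1 / sqrt (t - x))) has_integral c * (2 * sqrt (t - b))) {b<..<t}"
      using has_integral_mult_right[OF sing_right[OF bt], of c] hoi by blast
    have i_up: "(\<lambda>x. r * K x + c * (1 / sqrt (t - x))) integrable_on {b<..<t}"
      using integrable_add[OF integrable_on_mult_right[OF KIo] has_integral_integrable[OF sqint]] by blast
    have uph: "integral {b<..<t} h \<le> integral {b<..<t} (\<lambda>x. r * K x + c * (1 / sqrt (t - x)))"
      by (rule integral_le[OF hio i_up]) (use pw in blast)
    also have "\<dots> = r * integral {b<..<t} K + c * (2 * sqrt (t - b))"
      using integral_add[OF integrable_on_mult_right[OF KIo, of r] has_integral_integrable[OF sqint]] integral_unique[OF sqint]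
      by simp
    finally have uph2: "integral {b<..<t} h \<le> r * integral {b<..<t} K + c * (2 * sqrt (t - b))" .
    have KL: "integral {b<..<t} K \<le> L" using sub[of t] bt unfolding L_def by (simp add: integral_open_interval_real[symmetric])
    have KL2: "integral {b<..<t} K \<ge> L - 2 * (a + b) / t" using low[OF tm0] unfolding L_def by (simp add: integral_open_interval_real[symmetric])
    have up: "t * (I3 a b t - J3 a b t) \<le> r * L + 2 * c * sqrt (t - b)"
    proof -
      have "r * integral {b<..<t} K \<le> r * L" using KL rpos by (intro mult_left_mono) auto
      then show ?thesis using uph2 De by linarith
    qed
    have c0p: "b + c0 > 0" unfolding c0_def by auto
    have lnint: "((\<lambda>x. 1 / (x + c0)) has_integral (ln (t + c0) - ln (b + c0))) {b..t}"
    proof (rule fundamental_theorem_of_calculus)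
      show "b \<le> t" using bt by simp
      fix x assume x: "x \<in> {b..t}"
      then have "x + c0 > 0" using c0p by auto
      then have "((\<lambda>x. ln (x + c0)) has_real_derivative 1 / (x + c0)) (at x within {b..t})"
        by (auto intro!: derivative_eq_intros)
      then show "((\<lambda>x. ln (x + c0)) has_vector_derivative 1 / (x + c0)) (at x within {b..t})"
        by (simp add: has_real_derivative_iff_has_vector_derivative)
    qed
    have lnio: "((\<lambda>x. 1 / (x + c0)) has_integral (ln (t + c0) - ln (b + c0))) {b<..<t}"
      using lnint hoi by blast
    have tg1: "(\<lambda>x. t * g1 a b t x) integrable_on {b<..<t}"
    proof (rule integrable_eq[where f = "\<lambda>x. t * g2 a b t x + h x"])
      show "(\<lambda>x. t * g2 a b t x + h x) integrable_on {b<..<t}"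
        using integrable_add[OF integrable_on_mult_right[OF g2io] hio] by blast
      fix x assume "x \<in> {b<..<t}"
      then show "t * g2 a b t x + h x = t * g1 a b t x" using pw[of x] tpos by (simp add: field_simps)
    qed
    have "ln (t + c0) - ln (b + c0) \<le> integral {b<..<t} (\<lambda>x. t * g1 a b t x)"
      using has_integral_le[OF lnio integrable_integral[OF tg1]] pw by blast
    also have "\<dots> = t * I3 a b t" unfolding I3_def by (simp add: integral_open_interval_real)
    finally have dv: "ln (t + c0) - ln (b + c0) \<le> t * I3 a b t" .
    show ?thesis using KL2 De lowh up dv unfolding r_def c_def m_def L_def by auto
  qed
  have ev: "\<forall>\<^sub>F t in at_top. L - 2 * (a + b) / t \<le> t * (I3 a b t - J3 a b t)
      \<and> t * (I3 a b t - J3 a b t) \<le> t / sqrt (t\<^sup>2 - (t powr (3/4))\<^sup>2) * L + 2 * (2 * (a + b) / (t powr (3/4))\<^sup>2 * sqrt t) * sqrt (t - b)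
      \<and> ln (t + c0) - ln (b + c0) \<le> t * I3 a b t"
    using evE by eventually_elim (use main L_def in auto)
  have l1: "((\<lambda>t. L - 2 * (a + b) / t) \<longlongrightarrow> L) at_top" by real_asymp
  have r1: "((\<lambda>t. t / sqrt (t\<^sup>2 - (t powr (3/4))\<^sup>2)) \<longlongrightarrow> 1) at_top" by real_asymp
  have r2: "((\<lambda>t. 2 * (2 * (a + b) / (t powr (3/4))\<^sup>2 * sqrt t) * sqrt (t - b)) \<longlongrightarrow> 0) at_top" by real_asymp
  have u1: "((\<lambda>t. t / sqrt (t\<^sup>2 - (t powr (3/4))\<^sup>2) * L + 2 * (2 * (a + b) / (t powr (3/4))\<^sup>2 * sqrt t) * sqrt (t - b)) \<longlongrightarrow> 1 * L + 0) at_top"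
    by (intro tendsto_add tendsto_mult r1 r2 tendsto_const)
  have lim: "((\<lambda>t. t * (I3 a b t - J3 a b t)) \<longlongrightarrow> L) at_top"
    by (rule tendsto_sandwich[OF _ _ l1]) (use ev u1 in \<open>auto elim: eventually_mono\<close>)
  have lnlim: "filterlim (\<lambda>t. ln (t + c0) - ln (b + c0)) at_top at_top" unfolding c0_def by real_asymp
  have div: "filterlim (\<lambda>t. t * I3 a b t) at_top at_top"
    by (rule filterlim_at_top_mono[OF lnlim]) (use ev in \<open>auto elim: eventually_mono\<close>)
  show ?thesis using lim div unfolding L_def by blast
qed

lemma u_mono: fixes x y :: real assumes "x\<^sup>2 \<le> y\<^sup>2"
  shows "1 / sqrt (y\<^sup>2 + 4) \<le> 1 / sqrt (x\<^sup>2 + 4)"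
  using assms by (intro divide_left_mono) (auto intro!: mult_pos_pos)

lemma u_smono: fixes x y :: real assumes "x\<^sup>2 < y\<^sup>2"
  shows "1 / sqrt (y\<^sup>2 + 4) < 1 / sqrt (x\<^sup>2 + 4)"
  using assms by (intro divide_strict_left_mono) (auto intro!: mult_pos_pos)

lemma LIJ:
  fixes a b :: real
  assumes ab: "a < b" and s: "a + b > 0"
  shows "integral {-a..b} (\<lambda>\<zeta>. 1 / sqrt (\<zeta>\<^sup>2 + 4) * sqrt ((a + \<zeta>) / (b - \<zeta>)))
       < integral {-a..b} (\<lambda>\<zeta>. 1 / sqrt (\<zeta>\<^sup>2 + 4) * sqrt ((b - \<zeta>) / (a + \<zeta>)))"
proof -
  define fI where "fI = (\<lambda>\<zeta>::real. 1 / sqrt (\<zeta>\<^sup>2 + 4) * sqrt ((a + \<zeta>) / (b - \<zeta>)))"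
  define fJ where "fJ = (\<lambda>\<zeta>::real. 1 / sqrt (\<zeta>\<^sup>2 + 4) * sqrt ((b - \<zeta>) / (a + \<zeta>)))"
  define fB where "fB = (\<lambda>\<zeta>::real. 1 / sqrt (\<zeta>\<^sup>2 + 4) * sqrt ((b + \<zeta>) / (a - \<zeta>)))"
  have fIi: "fI integrable_on {-a..b}" using G1[OF s] unfolding fI_def by blast
  have fBi: "fB integrable_on {-b..a}" using G1[of b a] s unfolding fB_def by (simp add: add.commute)
  have fJB: "fJ = (\<lambda>x. fB (-x))" unfolding fJ_def fB_def by (rule ext) simp
  have fJi: "fJ integrable_on {-a..b}"
    using Henstock_Kurzweil_Integration.integrable_reflect_real[where f = fB and a = "-b" and b = a] fBi unfolding fJB by simp
  define S where "S = {-a..b}"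
  define D where "D = (\<lambda>x. fJ x - fI x)"
  have nnI: "fI x \<ge> 0" if "x \<in> S" for x using that unfolding fI_def S_def by auto
  have nnJ: "fJ x \<ge> 0" if "x \<in> S" for x using that unfolding fJ_def S_def by auto
  have Dai: "D absolutely_integrable_on S" unfolding D_def S_def
    by (intro set_integral_diff(1) nonnegative_absolutely_integrable_1 fIi fJi)
       (use nnI nnJ S_def in auto)
  define R where "R = (\<lambda>x::real. b - a - x)"
  have RS: "R ` S = S"
  proof
    show "R ` S \<subseteq> S" unfolding R_def S_def by auto
    show "S \<subseteq> R ` S"
    proof
      fix y assume "y \<in> S"
      then have "R (R y) = y" "R y \<in> S" unfolding R_def S_def by auto
      then show "y \<in> R ` S" by (metis image_eqI)
    qed
  qed
  have cov: "(\<lambda>x. \<bar>-1\<bar> * D (R x)) absolutely_integrable_on S \<and> integral S (\<lambda>x. \<bar>-1\<bar> * D (R x)) = integral S D"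
  proof -
    have "S \<in> sets lebesgue" unfolding S_def by simp
    moreover have "\<And>x. x \<in> S \<Longrightarrow> (R has_field_derivative (-1)) (at x within S)"
      unfolding R_def by (auto intro!: derivative_eq_intros)
    moreover have "inj_on R S" unfolding R_def by (auto intro: inj_onI)
    ultimately show ?thesis
      using has_absolute_integral_change_of_variables_1'[of S R "\<lambda>x. -1" D "integral S D"] Dai RS by auto
  qed
  define E where "E = (\<lambda>x. D x + D (R x))"
  have DRi: "(\<lambda>x. D (R x)) integrable_on S" using cov absolutely_integrable_on_def by auto
  have Di: "D integrable_on S" using Dai absolutely_integrable_on_def by auto
  have Ei: "E integrable_on S" unfolding E_def using integrable_add[OF Di DRi] by simp
  have Eint: "integral S E = 2 * integral S D" unfolding E_def using integral_add[OF Di DRi] cov by simp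
  define c where "c = (b - a) / 2"
  have Ee: "E x = (1 / sqrt (x\<^sup>2 + 4) - 1 / sqrt ((R x)\<^sup>2 + 4)) * (sqrt ((b - x) / (a + x)) - sqrt ((a + x) / (b - x)))" for x
  proof -
    have 1: "b - R x = a + x" "a + R x = b - x" unfolding R_def by simp_all
    show ?thesis unfolding E_def D_def fI_def fJ_def 1 by (simp add: algebra_simps)
  qed
  have Enn: "E x \<ge> 0" if x: "x \<in> {-a<..<b}" for x
  proof -
    have ax: "a + x > 0" "b - x > 0" using x by auto
    show ?thesis
    proof (cases "x \<le> c")
      case True
      have "b - x \<ge> a + x" using True unfolding c_def by auto
      then have "(a + x) / (b - x) \<le> (b - x) / (a + x)" using ax
        by (smt (verit) divide_le_eq_1_pos le_divide_eq_1_pos)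
      then have v: "sqrt ((a + x) / (b - x)) \<le> sqrt ((b - x) / (a + x))" by simp
      have "x\<^sup>2 \<le> (R x)\<^sup>2"
      proof -
        have "(R x)\<^sup>2 - x\<^sup>2 = (R x - x) * (R x + x)" by (simp add: power2_eq_square algebra_simps)
        moreover have "R x - x \<ge> 0" "R x + x \<ge> 0" using True ab unfolding R_def c_def by auto
        ultimately show ?thesis by (smt (verit) mult_nonneg_nonneg)
      qed
      then have "1 / sqrt ((R x)\<^sup>2 + 4) \<le> 1 / sqrt (x\<^sup>2 + 4)" by (rule u_mono)
      then show ?thesis unfolding Ee using v by (intro mult_nonneg_nonneg) auto
    next
      case False
      have "b - x \<le> a + x" using False unfolding c_def by auto
      then have "(b - x) / (a + x) \<le> (a + x) / (b - x)" using ax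
        by (smt (verit) divide_le_eq_1_pos le_divide_eq_1_pos)
      then have v: "sqrt ((b - x) / (a + x)) \<le> sqrt ((a + x) / (b - x))" by simp
      have "(R x)\<^sup>2 \<le> x\<^sup>2"
      proof -
        have "x\<^sup>2 - (R x)\<^sup>2 = (x - R x) * (x + R x)" by (simp add: power2_eq_square algebra_simps)
        moreover have "x - R x \<ge> 0" "x + R x \<ge> 0" using False ab unfolding R_def c_def by auto
        ultimately show ?thesis by (smt (verit) mult_nonneg_nonneg)
      qed
      then have "1 / sqrt (x\<^sup>2 + 4) \<le> 1 / sqrt ((R x)\<^sup>2 + 4)" by (rule u_mono)
      then show ?thesis unfolding Ee using v by (intro mult_nonpos_nonpos) auto
    qed
  qed
  define p where "p = -a + (a + b) / 8"
  define q where "q = -a + (a + b) / 4"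
  have pq: "-a < p" "p < q" "q < c" "q < b" unfolding p_def q_def c_def using s ab by (simp_all add: field_simps)
  have Ep: "E p > 0"
  proof -
    have ax: "a + p > 0" "b - p > 0" using pq by auto
    have "b - p > a + p" using pq unfolding c_def by auto
    then have "(a + p) / (b - p) < (b - p) / (a + p)" using ax
      by (smt (verit) divide_less_eq_1_pos less_divide_eq_1_pos)
    then have v: "sqrt ((a + p) / (b - p)) < sqrt ((b - p) / (a + p))" by simp
    have "p\<^sup>2 < (R p)\<^sup>2"
    proof -
      have "(R p)\<^sup>2 - p\<^sup>2 = (R p - p) * (R p + p)" by (simp add: power2_eq_square algebra_simps)
      moreover have "R p - p > 0" "R p + p > 0" using pq ab unfolding R_def c_def by auto
      ultimately show ?thesis by (smt (verit) mult_pos_pos)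
    qed
    then have "1 / sqrt ((R p)\<^sup>2 + 4) < 1 / sqrt (p\<^sup>2 + 4)" by (rule u_smono)
    then show ?thesis unfolding Ee using v by (intro mult_pos_pos) auto
  qed
  have Econt: "continuous_on {p..q} E"
  proof -
    have "\<And>x. x \<in> {p..q} \<Longrightarrow> a + x \<noteq> 0 \<and> b - x \<noteq> 0 \<and> a + R x \<noteq> 0 \<and> b - R x \<noteq> 0"
      using pq unfolding R_def c_def by auto
    then show ?thesis unfolding E_def D_def fI_def fJ_def R_def
      by (intro continuous_intros) auto
  qed
  have e0: "integral (cbox p q) E = 0 \<longleftrightarrow> (\<forall>x\<in>cbox p q. E x = 0)"
    by (rule integral_cbox_eq_0_iff) (use Econt pq Enn in auto)
  have ne: "integral {p..q} E \<noteq> 0" using e0 Ep pq by auto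
  have Epq: "E integrable_on {p..q}" using integrable_continuous_interval Econt by blast
  have "integral {p..q} E \<ge> 0" by (rule integral_nonneg[OF Epq]) (use Enn pq in auto)
  then have pos1: "integral {p..q} E > 0" using ne by linarith
  have Eio: "E integrable_on {-a<..<b}" using Ei integrable_on_open_interval_real unfolding S_def by blast
  have "integral {p..q} E \<le> integral {-a<..<b} E"
    by (rule integral_subset_le[OF _ Epq Eio]) (use pq Enn in auto)
  also have "\<dots> = integral S E" unfolding S_def by (simp add: integral_open_interval_real)
  finally have "integral S D > 0" using Eint pos1 by linarith
  then have "integral S fJ - integral S fI > 0" using integral_diff[OF fJi fIi] unfolding D_def S_def by simp
  then show ?thesis unfolding fI_def fJ_def S_def by simp
qed

theorem mainTheorem8:
  fixes \<alpha> \<beta> :: real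
  assumes "\<alpha> < \<beta>" and "\<alpha> + \<beta> > 0"
  defines "LI \<equiv> integral {-\<alpha>..\<beta>} (\<lambda>\<zeta>. 1 / sqrt (\<zeta>\<^sup>2 + 4) * sqrt ((\<alpha> + \<zeta>) / (\<beta> - \<zeta>)))"
      and "LJ \<equiv> integral {-\<alpha>..\<beta>} (\<lambda>\<zeta>. 1 / sqrt (\<zeta>\<^sup>2 + 4) * sqrt ((\<beta> - \<zeta>) / (\<alpha> + \<zeta>)))"
      and "K1 \<equiv> (\<lambda>\<zeta>. (\<alpha> + \<beta>) / (sqrt (\<zeta>\<^sup>2 + 4) * sqrt (\<beta> - \<zeta>) * sqrt (-\<alpha> - \<zeta>)))"
      and "K3 \<equiv> (\<lambda>\<zeta>. (\<alpha> + \<beta>) / (sqrt (\<zeta>\<^sup>2 + 4) * sqrt (\<zeta> - \<beta>) * sqrt (\<zeta> + \<alpha>)))"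
  shows
    "(\<lambda>\<zeta>. 1 / sqrt (\<zeta>\<^sup>2 + 4) * sqrt ((\<alpha> + \<zeta>) / (\<beta> - \<zeta>))) integrable_on {-\<alpha>..\<beta>}
     \<and> (\<lambda>\<zeta>. 1 / sqrt (\<zeta>\<^sup>2 + 4) * sqrt ((\<beta> - \<zeta>) / (\<alpha> + \<zeta>))) integrable_on {-\<alpha>..\<beta>}
     \<and> ((\<lambda>\<tau>. \<tau> * I2 \<alpha> \<beta> \<tau>) \<longlongrightarrow> LI) at_top
     \<and> ((\<lambda>\<tau>. \<tau> * J2 \<alpha> \<beta> \<tau>) \<longlongrightarrow> LJ) at_top
     \<and> LI < LJ
     \<and> K1 integrable_on {..-\<alpha>} \<and> K3 integrable_on {\<beta>..}
     \<and> ((\<lambda>\<tau>. \<tau> * (I1 \<alpha> \<beta> \<tau> - J1 \<alpha> \<beta> \<tau>)) \<longlongrightarrow> - integral {..-\<alpha>} K1) at_top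
     \<and> ((\<lambda>\<tau>. \<tau> * (I3 \<alpha> \<beta> \<tau> - J3 \<alpha> \<beta> \<tau>)) \<longlongrightarrow> integral {\<beta>..} K3) at_top
     \<and> integral {..-\<alpha>} K1 \<noteq> 0 \<and> integral {\<beta>..} K3 \<noteq> 0
     \<and> filterlim (\<lambda>\<tau>. \<tau> * (J1 \<alpha> \<beta> \<tau> + J3 \<alpha> \<beta> \<tau>)) at_top at_top"
proof -
  note ab = assms(1) and s1 = assms(2)
  have s2: "\<beta> + \<alpha> > 0" using s1 by simp
  define fB where "fB = (\<lambda>\<zeta>::real. 1 / sqrt (\<zeta>\<^sup>2 + 4) * sqrt ((\<beta> + \<zeta>) / (\<alpha> - \<zeta>)))"
  define fJ where "fJ = (\<lambda>\<zeta>::real. 1 / sqrt (\<zeta>\<^sup>2 + 4) * sqrt ((\<beta> - \<zeta>) / (\<alpha> + \<zeta>)))"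
  note GA = G1[OF s1]
  have GB: "fB integrable_on {-\<beta>..\<alpha>} \<and> ((\<lambda>\<tau>. \<tau> * I2 \<beta> \<alpha> \<tau>) \<longlongrightarrow> integral {-\<beta>..\<alpha>} fB) at_top"
    using G1[OF s2] unfolding fB_def by blast
  have fJB: "fJ = (\<lambda>x. fB (-x))" unfolding fJ_def fB_def by (rule ext) simp
  have fJi: "fJ integrable_on {-\<alpha>..\<beta>}"
    using Henstock_Kurzweil_Integration.integrable_reflect_real[where f = fB and a = "-\<beta>" and b = \<alpha>] GB
    unfolding fJB by simp
  have LJe: "LJ = integral {-\<beta>..\<alpha>} fB"
    using Henstock_Kurzweil_Integration.integral_reflect_real[where f = fB and a = "-\<beta>" and b = \<alpha>]
    unfolding LJ_def fJ_def[symmetric] fJB by simp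
  have g21: "g2 \<alpha> \<beta> t = (\<lambda>x. g1 \<beta> \<alpha> t (-x))" for t
  proof (rule ext)
    fix x
    have "\<bar>- x + \<beta>\<bar> = \<bar>x - \<beta>\<bar>" "\<bar>- x - \<alpha>\<bar> = \<bar>x + \<alpha>\<bar>" by linarith+
    then show "g2 \<alpha> \<beta> t x = g1 \<beta> \<alpha> t (- x)" unfolding g1_def g2_def by simp
  qed
  have g12: "g1 \<alpha> \<beta> t = (\<lambda>x. g2 \<beta> \<alpha> t (-x))" for t
  proof (rule ext)
    fix x
    have "\<bar>- x + \<beta>\<bar> = \<bar>x - \<beta>\<bar>" "\<bar>- x - \<alpha>\<bar> = \<bar>x + \<alpha>\<bar>" by linarith+
    then show "g1 \<alpha> \<beta> t x = g2 \<beta> \<alpha> t (- x)" unfolding g1_def g2_def by simp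
  qed
  have J2e: "J2 \<alpha> \<beta> t = I2 \<beta> \<alpha> t" for t
    using Henstock_Kurzweil_Integration.integral_reflect_real[where f = "g1 \<beta> \<alpha> t" and a = "-\<beta>" and b = \<alpha>]
    unfolding J2_def I2_def g21 by simp
  have J1e: "J1 \<alpha> \<beta> t = I3 \<beta> \<alpha> t" for t
    using Henstock_Kurzweil_Integration.integral_reflect_real[where f = "g1 \<beta> \<alpha> t" and a = \<alpha> and b = t]
    unfolding J1_def I3_def g21 by simp
  have I1e: "I1 \<alpha> \<beta> t = J3 \<beta> \<alpha> t" for t
    using Henstock_Kurzweil_Integration.integral_reflect_real[where f = "g2 \<beta> \<alpha> t" and a = \<alpha> and b = t]
    unfolding I1_def J3_def g12 by simp
  define m0 where "m0 = 2 * (\<bar>\<alpha>\<bar> + \<bar>\<beta>\<bar>) + 1"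
  note P3 = G3_pre[OF s1 K3_def[THEN meta_eq_to_obj_eq] m0_def]
  note Q3 = G3[OF s1 K3_def[THEN meta_eq_to_obj_eq]]
  define K3' where "K3' = (\<lambda>\<zeta>::real. (\<beta> + \<alpha>) / (sqrt (\<zeta>\<^sup>2 + 4) * sqrt (\<zeta> - \<alpha>) * sqrt (\<zeta> + \<beta>)))"
  define m0' where "m0' = 2 * (\<bar>\<beta>\<bar> + \<bar>\<alpha>\<bar>) + 1"
  note P1 = G3_pre[OF s2 K3'_def m0'_def]
  note Q1 = G3[OF s2 K3'_def]
  have K3'ai: "K3' absolutely_integrable_on {\<alpha>..}"
    using P1 by (intro nonnegative_absolutely_integrable_1) auto
  have K1K3': "\<bar>-1\<bar> * K1 (- x) = K3' x" for x
    unfolding K1_def K3'_def by (simp add: algebra_simps)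
  have cov: "(\<lambda>x. \<bar>-1\<bar> * K1 (- x)) absolutely_integrable_on {\<alpha>..} \<and>
        integral {\<alpha>..} (\<lambda>x. \<bar>-1\<bar> * K1 (- x)) = integral {\<alpha>..} K3'
     \<longleftrightarrow> K1 absolutely_integrable_on (uminus ` {\<alpha>..}) \<and> integral (uminus ` {\<alpha>..}) K1 = integral {\<alpha>..} K3'"
    by (rule has_absolute_integral_change_of_variables_1') (auto intro!: derivative_eq_intros)
  have K1r: "K1 absolutely_integrable_on {..-\<alpha>} \<and> integral {..-\<alpha>} K1 = integral {\<alpha>..} K3'"
    using cov K3'ai unfolding K1K3' by simp
  have K1i: "K1 integrable_on {..-\<alpha>}" using K1r absolutely_integrable_on_def by blast
  have lim1: "((\<lambda>\<tau>. \<tau> * (I1 \<alpha> \<beta> \<tau> - J1 \<alpha> \<beta> \<tau>)) \<longlongrightarrow> - integral {..-\<alpha>} K1) at_top"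
  proof -
    have "((\<lambda>\<tau>. - (\<tau> * (I3 \<beta> \<alpha> \<tau> - J3 \<beta> \<alpha> \<tau>))) \<longlongrightarrow> - integral {\<alpha>..} K3') at_top"
      using Q1 by (intro tendsto_minus) blast
    moreover have "- (\<tau> * (I3 \<beta> \<alpha> \<tau> - J3 \<beta> \<alpha> \<tau>)) = \<tau> * (I1 \<alpha> \<beta> \<tau> - J1 \<alpha> \<beta> \<tau>)" for \<tau>
      unfolding I1e J1e by (simp add: algebra_simps)
    ultimately show ?thesis using K1r by simp
  qed
  have K1nz: "integral {..-\<alpha>} K1 \<noteq> 0" using K1r P1 by auto
  have K3nz: "integral {\<beta>..} K3 \<noteq> 0" using P3 by auto
  have div: "filterlim (\<lambda>\<tau>. \<tau> * (J1 \<alpha> \<beta> \<tau> + J3 \<alpha> \<beta> \<tau>)) at_top at_top"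
  proof (rule filterlim_at_top_mono[where f = "\<lambda>\<tau>. \<tau> * I3 \<beta> \<alpha> \<tau>"])
    show "filterlim (\<lambda>\<tau>. \<tau> * I3 \<beta> \<alpha> \<tau>) at_top at_top" using Q1 by blast
    show "\<forall>\<^sub>F \<tau> in at_top. \<tau> * I3 \<beta> \<alpha> \<tau> \<le> \<tau> * (J1 \<alpha> \<beta> \<tau> + J3 \<alpha> \<beta> \<tau>)"
    proof (rule eventually_at_top_linorderI[of "\<bar>\<beta>\<bar> + 1"])
      fix t :: real assume t: "t \<ge> \<bar>\<beta>\<bar> + 1"
      have nn: "g2 \<alpha> \<beta> t x \<ge> 0" if "x \<in> {\<beta>..t}" for x
      proof -
        have "\<bar>x\<bar> \<le> t" using that t by auto
        then have "x\<^sup>2 \<le> t\<^sup>2" using abs_le_square_iff[of x t] t by auto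
        then show ?thesis unfolding g2_def by (intro divide_nonneg_nonneg mult_nonneg_nonneg) auto
      qed
      have "J3 \<alpha> \<beta> t \<ge> 0"
      proof (cases "g2 \<alpha> \<beta> t integrable_on {\<beta>..t}")
        case True then show ?thesis using integral_nonneg[OF True nn] by (simp add: J3_def)
      next
        case False then show ?thesis by (simp add: not_integrable_integral J3_def)
      qed
      then show "t * I3 \<beta> \<alpha> t \<le> t * (J1 \<alpha> \<beta> t + J3 \<alpha> \<beta> t)"
        unfolding J1e using t by (simp add: algebra_simps)
    qed
  qed
  show ?thesis
  proof (intro conjI)
    show "(\<lambda>\<zeta>. 1 / sqrt (\<zeta>\<^sup>2 + 4) * sqrt ((\<alpha> + \<zeta>) / (\<beta> - \<zeta>))) integrable_on {-\<alpha>..\<beta>}" using GA by blast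
    show "(\<lambda>\<zeta>. 1 / sqrt (\<zeta>\<^sup>2 + 4) * sqrt ((\<beta> - \<zeta>) / (\<alpha> + \<zeta>))) integrable_on {-\<alpha>..\<beta>}" using fJi unfolding fJ_def .
    show "((\<lambda>\<tau>. \<tau> * I2 \<alpha> \<beta> \<tau>) \<longlongrightarrow> LI) at_top" using GA unfolding LI_def by blast
    show "((\<lambda>\<tau>. \<tau> * J2 \<alpha> \<beta> \<tau>) \<longlongrightarrow> LJ) at_top" using GB unfolding LJe J2e by blast
    show "LI < LJ" unfolding LI_def LJ_def using LIJ[OF ab s1] .
    show "K1 integrable_on {..-\<alpha>}" by (rule K1i)
    show "K3 integrable_on {\<beta>..}" using P3 by blast
    show "((\<lambda>\<tau>. \<tau> * (I1 \<alpha> \<beta> \<tau> - J1 \<alpha> \<beta> \<tau>)) \<longlongrightarrow> - integral {..-\<alpha>} K1) at_top" by (rule lim1)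
    show "((\<lambda>\<tau>. \<tau> * (I3 \<alpha> \<beta> \<tau> - J3 \<alpha> \<beta> \<tau>)) \<longlongrightarrow> integral {\<beta>..} K3) at_top" using Q3 by blast
    show "integral {..-\<alpha>} K1 \<noteq> 0" by (rule K1nz)
    show "integral {\<beta>..} K3 \<noteq> 0" by (rule K3nz)
    show "filterlim (\<lambda>\<tau>. \<tau> * (J1 \<alpha> \<beta> \<tau> + J3 \<alpha> \<beta> \<tau>)) at_top at_top" by (rule div)
  qed
qed

end
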